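(* Let $X$ be a nonempty set and $F\colon X^*\to X\cup\{\varepsilon\}$ an $\varepsilon$-standard operation. The following are equivalent: (i) $F$ is associative and range-idempotent; (ii) $F$ is associative and $F(F(x),F(x))=F(x)$ for every $x\in X$; (iii) $F$ is preassociative, unarily quasi-range-idempotent, and range-idempotent; (iv) $F$ is preassociative, unarily quasi-range-idempotent, and satisfies $F_1\circ F_1=F_1$ and $F(F(x),F(x))=F(x)$ for every $x\in X$.
   Context: $X^*=\bigcup_{n\geqslant 0}X^n$ is the set of finite tuples over $X$, $X^0=\{\varepsilon\}$ with $\varepsilon\notin X$ the empty tuple; $F(\mathbf{x},\mathbf{y})$ denotes $F$ applied to the concatenation, concatenation with $\varepsilon$ leaving tuples unchanged. $F_n=F|_{X^n}$, $F^{\flat}=F|_{X^*\setminus\{\varepsilon\}}$. $F$ is $\varepsilon$-standard if $F(\varepsilon)=\varepsilon$ and $F(\mathbf{x})\neq\varepsilon$ for $\mathbf{x}\neq\varepsilon$. $F$ is associative if $F(\mathbf{x},\mathbf{y},\mathbf{z})=F(\mathbf{x},F(\mathbf{y}),\mathbf{z})$ for all $\mathbf{x},\mathbf{y},\mathbf{z}\in X^*$ (a value $\varepsilon$ treated as the empty tuple). $F$ is preassociative if $F(\mathbf{y})=F(\mathbf{y}')$ implies $F(\mathbf{x},\mathbf{y},\mathbf{z})=F(\mathbf{x},\mathbf{y}',\mathbf{z})$ for all tuples. $F$ is unarily quasi-range-idempotent if $\mathrm{ran}(F_1)=\mathrm{ran}(F^{\flat})$. $F$ is range-idempotent if $F(x,\ldots,x)=x$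 ($x$ repeated $k$ times) for every $x\in\mathrm{ran}(F^{\flat})$ and every integer $k\geqslant 1$. *)

theory Defs
  imports Main
begin

text \<open>Tuples over X are lists over the type 'a (X = UNIV, nonempty as every type);
  the empty tuple is []. Values of F lie in X \<union> {epsilon}, modelled as 'a option with
  None = epsilon.\<close>

definition tup :: "'a option \<Rightarrow> 'a list" where
  "tup v = (case v of None \<Rightarrow> [] | Some x \<Rightarrow> [x])"

definition eps_standard :: "('a list \<Rightarrow> 'a option) \<Rightarrow> bool" where
  "eps_standard F \<longleftrightarrow> F [] = None \<and> (\<forall>xs. xs \<noteq> [] \<longrightarrow> F xs \<noteq> None)"

definition associative :: "('a list \<Rightarrow> 'a option) \<Rightarrow> bool" where
  "associative F \<longleftrightarrow> (\<forall>xs ys zs. F (xs @ ys @ zs) = F (xs @ tup (F ys) @ zs))"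

definition preassociative :: "('a list \<Rightarrow> 'a option) \<Rightarrow> bool" where
  "preassociative F \<longleftrightarrow>
     (\<forall>ys ys'. F ys = F ys' \<longrightarrow> (\<forall>xs zs. F (xs @ ys @ zs) = F (xs @ ys' @ zs)))"

definition ran_F1 :: "('a list \<Rightarrow> 'a option) \<Rightarrow> 'a option set" where
  "ran_F1 F = {F [x] | x. True}"

definition ran_Fflat :: "('a list \<Rightarrow> 'a option) \<Rightarrow> 'a option set" where
  "ran_Fflat F = {F xs | xs. xs \<noteq> []}"

definition unarily_quasi_range_idempotent :: "('a list \<Rightarrow> 'a option) \<Rightarrow> bool" where
  "unarily_quasi_range_idempotent F \<longleftrightarrow> ran_F1 F = ran_Fflat F"

definition range_idempotent :: "('a list \<Rightarrow> 'a option) \<Rightarrow> bool" where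
  "range_idempotent F \<longleftrightarrow>
     (\<forall>y \<in> ran_Fflat F. \<forall>k::nat. k \<ge> 1 \<longrightarrow> F (concat (replicate k (tup y))) = y)"

end

theory Submission
  imports Defs
begin

lemma L1:
  assumes "associative F" shows "F (tup (F ys)) = F ys"
  using assms unfolding associative_def by (metis append_Nil append_Nil2)

lemma L2: "associative F \<Longrightarrow> preassociative F"
  unfolding associative_def preassociative_def by metis

lemma L3:
  assumes es: "eps_standard F" and pa: "preassociative F"
    and h: "\<And>ys a. ys \<noteq> [] \<Longrightarrow> F ys = Some a \<Longrightarrow> F [a] = Some a"
  shows "associative F"
  unfolding associative_def
proof (intro allI)
  fix xs ys zs
  show "F (xs @ ys @ zs) = F (xs @ tup (F ys) @ zs)"
  proof (cases "ys = []")
    case True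
    then show ?thesis using es by (simp add: eps_standard_def tup_def)
  next
    case False
    then obtain a where a: "F ys = Some a" using es unfolding eps_standard_def by blast
    with h False have "F [a] = F ys" by simp
    then have "F (xs @ [a] @ zs) = F (xs @ ys @ zs)" using pa unfolding preassociative_def by blast
    then show ?thesis using a by (simp add: tup_def)
  qed
qed

lemma rep_step:
  assumes "associative F"
  shows "F (replicate (Suc (Suc k)) a) = F (tup (F (replicate (Suc k) a)) @ [a])"
proof -
  have "replicate (Suc (Suc k)) a = [] @ replicate (Suc k) a @ [a]"
    by (simp add: replicate_append_same[symmetric])
  then show ?thesis using assms unfolding associative_def by (metis append_Nil)
qed

lemma L4:
  assumes es: "eps_standard F" and as: "associative F"
    and h: "\<forall>x. F (tup (F [x]) @ tup (F [x])) = F [x]"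
  shows "range_idempotent F"
  unfolding range_idempotent_def
proof (intro ballI allI impI)
  fix y and k :: nat
  assume y: "y \<in> ran_Fflat F" and k: "1 \<le> k"
  then obtain xs where xs: "xs \<noteq> []" "y = F xs" unfolding ran_Fflat_def by blast
  then obtain a where a: "y = Some a" using es unfolding eps_standard_def by blast
  have Fa: "F [a] = Some a" using L1[OF as, of xs] xs a by (simp add: tup_def split: option.splits)
  have Faa: "F [a, a] = Some a" using h Fa by (metis append_Cons append_Nil tup_def option.simps(5))
  have c: "concat (replicate k (tup y)) = replicate k a"
    using a by (induction k) (auto simp: tup_def)
  have "F (replicate (Suc m) a) = Some a" for m
  proof (induction m)
    case 0 then show ?case using Fa by simp
  next
    case (Suc m)
    then show ?case using rep_step[OF as, of m a] Faa by (simp add: tup_def)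
  qed
  then show "F (concat (replicate k (tup y))) = y"
    using k c a by (metis Suc_pred' less_eq_Suc_le One_nat_def)
qed

theorem lemma5p6:
  fixes F :: "'a list \<Rightarrow> 'a option"
  assumes "eps_standard F"
  shows "((associative F \<and> range_idempotent F)
          \<longleftrightarrow> (associative F \<and> (\<forall>x. F (tup (F [x]) @ tup (F [x])) = F [x])))
       \<and> ((associative F \<and> range_idempotent F)
          \<longleftrightarrow> (preassociative F \<and> unarily_quasi_range_idempotent F \<and> range_idempotent F))
       \<and> ((associative F \<and> range_idempotent F)
          \<longleftrightarrow> (preassociative F \<and> unarily_quasi_range_idempotent F
               \<and> (\<forall>x. F (tup (F [x])) = F [x])
               \<and> (\<forall>x. F (tup (F [x]) @ tup (F [x])) = F [x])))"
proof -
  note es = assms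
  have ri2: "F (tup (F [x]) @ tup (F [x])) = F [x]" if "range_idempotent F" for x
  proof -
    have "F [x] \<in> ran_Fflat F" unfolding ran_Fflat_def by blast
    then have "F (concat (replicate 2 (tup (F [x])))) = F [x]"
      using that unfolding range_idempotent_def by (meson one_le_numeral)
    then show ?thesis by (simp add: numeral_2_eq_2)
  qed
  have uq: "unarily_quasi_range_idempotent F" if as: "associative F"
  proof -
    have "ran_Fflat F \<subseteq> ran_F1 F"
    proof
      fix y assume "y \<in> ran_Fflat F"
      then obtain xs where xs: "xs \<noteq> []" "y = F xs" unfolding ran_Fflat_def by blast
      then obtain a where a: "y = Some a" using es unfolding eps_standard_def by blast
      have "F [a] = y" using L1[OF as, of xs] xs a by (simp add: tup_def split: option.splits)
      then show "y \<in> ran_F1 F" unfolding ran_F1_def by blast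
    qed
    moreover have "ran_F1 F \<subseteq> ran_Fflat F" unfolding ran_F1_def ran_Fflat_def by blast
    ultimately show ?thesis unfolding unarily_quasi_range_idempotent_def by blast
  qed
  have iii: "associative F" if "preassociative F" "range_idempotent F"
  proof (rule L3[OF es that(1)])
    fix ys a assume "ys \<noteq> []" "F ys = Some a"
    then have "Some a \<in> ran_Fflat F" unfolding ran_Fflat_def by force
    then have "F (concat (replicate 1 (tup (Some a)))) = Some a"
      using that(2) unfolding range_idempotent_def by blast
    then show "F [a] = Some a" by (simp add: tup_def)
  qed
  have iv: "associative F" if "preassociative F" "unarily_quasi_range_idempotent F"
      "\<forall>x. F (tup (F [x])) = F [x]"
  proof (rule L3[OF es that(1)])
    fix ys a assume "ys \<noteq> []" "F ys = Some a"
    then have "Some a \<in> ran_Fflat F" unfolding ran_Fflat_def by force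
    then have "Some a \<in> ran_F1 F" using that(2)
      unfolding unarily_quasi_range_idempotent_def by simp
    then obtain x where "F [x] = Some a" unfolding ran_F1_def by auto
    then show "F [a] = Some a" using that(3) by (metis tup_def option.simps(5))
  qed
  show ?thesis
    using ri2 uq iii iv L4[OF es] L2 L1 by blast
qed

end
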